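(* Let $\alpha\in(0,1)$, $\gamma,\beta>0$, $r_0>0$, $Y=B(0,r_0)\subset\mathbb R\oplus\mathbb R^{d-1}$, $\mathcal X(x)=\|x\|^\alpha Ax$ with $A=\gamma\,\mathrm{Id}_{\mathbb R}\oplus(-\beta\,\mathrm{Id}_{\mathbb R^{d-1}})$. For a trajectory $x(t)$ of $\mathcal X$ in $Y$, with $\theta(t)$ the angle between $x(t)$ and $\mathbb R\times\{0\}$ ($\tan\theta=\|x_s\|/\|x_u\|$), $$\frac{d}{dt}\|x\|^{-\alpha}=\alpha(\beta\sin^2\theta-\gamma\cos^2\theta)=\alpha\xi(\tan\theta),\qquad \xi(s)=\frac{\beta s^2-\gamma}{s^2+1}.$$ In particular, for every piece of trajectory $x\colon[0,T]\to Y$ and $t\in[0,T]$: $-\gamma\alpha\le\frac{d}{dt}\|x\|^{-\alpha}\le\beta\alpha$, $\|x(t)\|^{-\alpha}\le\|x(T)\|^{-\alpha}+\gamma\alpha(T-t)$, and $\|x(t)\|^{-\alpha}\le\|x(0)\|^{-\alpha}+\beta\alpha t$. Moreover, if $x\colon[0,T_0]\to Y$ enters $Y$ at time $0$ and leaves it at time $T_0$ (so $\|x(0)\|=\|x(T_0)\|=r_0$), and $s$ satisfies $\tan\theta(0)>s>\tan\theta(T_0)$ with $T_s$ the time at which $\tan\theta(T_s)=s$, then $\|x(t)\|^{-\alpha}\ge r_0^{-\alpha}+\alpha\xi(s)t$ for all $t\in[0,T_s]$ and $\|x(t)\|^{-\alpha}\ge r_0^{-\alpha}-\alpha\xi(s)(T_0-t)$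 for all $t\in[T_s,T_0]$.
   Context: $T_s$ is well defined because $\tan\theta$ is strictly decreasing along trajectories in $Y$. *)

theory Defs
  imports "HOL-Analysis.Analysis"
begin

text \<open>The space R (+) R^(d-1) is modelled as real \<times> 'b with 'b a Euclidean space
  (the stable factor R^(d-1)); the product norm is the Euclidean norm.
  First component = unstable coordinate x_u, second = stable coordinate x_s.\<close>

definition linA :: "real \<Rightarrow> real \<Rightarrow> real \<times> 'b::euclidean_space \<Rightarrow> real \<times> 'b" where
  "linA \<gamma> \<beta> p = (\<gamma> * fst p, - \<beta> *\<^sub>R snd p)"

definition VF :: "real \<Rightarrow> real \<Rightarrow> real \<Rightarrow> real \<times> 'b::euclidean_space \<Rightarrow> real \<times> 'b" where
  "VF \<alpha> \<gamma> \<beta> p = (norm p powr \<alpha>) *\<^sub>R linA \<gamma> \<beta> p"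

definition theta :: "real \<times> 'b::euclidean_space \<Rightarrow> real" where
  "theta p = arccos (\<bar>fst p\<bar> / norm p)"

definition xi :: "real \<Rightarrow> real \<Rightarrow> real \<Rightarrow> real" where
  "xi \<gamma> \<beta> s = (\<beta> * s\<^sup>2 - \<gamma>) / (s\<^sup>2 + 1)"

definition is_traj :: "real \<Rightarrow> real \<Rightarrow> real \<Rightarrow> (real \<Rightarrow> real \<times> 'b::euclidean_space) \<Rightarrow> real \<Rightarrow> bool" where
  "is_traj \<alpha> \<gamma> \<beta> x T \<longleftrightarrow>
     (\<forall>t\<in>{0..T}. (x has_vector_derivative VF \<alpha> \<gamma> \<beta> (x t)) (at t within {0..T}))"

end

theory Submission imports Defs begin

lemma norm_sq_prod: "(norm p)\<^sup>2 = (fst p)\<^sup>2 + (norm (snd p))\<^sup>2"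
  for p :: "real \<times> 'b::euclidean_space"
  by (cases p) (simp add: norm_Pair)

lemma abs_fst_le: "\<bar>fst p\<bar> \<le> norm p"
  for p :: "real \<times> 'b::euclidean_space"
proof -
  have "(fst p)\<^sup>2 \<le> (norm p)\<^sup>2" using norm_sq_prod[of p] by simp
  then show ?thesis using abs_le_square_iff[of "fst p" "norm p"] by simp
qed

lemma ratio_bd: "\<bar>\<bar>fst p\<bar> / norm p\<bar> \<le> 1"
  for p :: "real \<times> 'b::euclidean_space"
  using abs_fst_le[of p] by (cases "p = 0") (auto simp: divide_le_eq_1)

lemma cos_theta: "cos (theta p) = \<bar>fst p\<bar> / norm p"
  for p :: "real \<times> 'b::euclidean_space"
  unfolding theta_def using ratio_bd[of p] by (intro cos_arccos) (auto intro: order_trans[of _ 0])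

lemma cos2_theta: "(cos (theta p))\<^sup>2 = (fst p)\<^sup>2 / (norm p)\<^sup>2"
  for p :: "real \<times> 'b::euclidean_space"
  by (simp add: cos_theta power_divide)

lemma sin2_theta: "(sin (theta p))\<^sup>2 = 1 - (fst p)\<^sup>2 / (norm p)\<^sup>2"
  for p :: "real \<times> 'b::euclidean_space"
  using sin_cos_squared_add[of "theta p"] cos2_theta[of p] by simp

lemma D_expr: "b * (sin (theta p))\<^sup>2 - g * (cos (theta p))\<^sup>2 = b - (b + g) * ((fst p)\<^sup>2 / (norm p)\<^sup>2)"
  for p :: "real \<times> 'b::euclidean_space"
  unfolding sin2_theta cos2_theta by (simp add: algebra_simps add_divide_distrib)

lemma tan_theta_nonneg: "0 \<le> tan (theta p)"
  for p :: "real \<times> 'b::euclidean_space"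
proof -
  have "0 \<le> sin (theta p)" unfolding theta_def
    using ratio_bd[of p] by (simp add: sin_arccos_abs power_le_one)
  moreover have "0 \<le> cos (theta p)"
    by (simp add: cos_theta)
  ultimately show ?thesis by (simp add: tan_def)
qed

lemma xi_eq: fixes p :: "real \<times> 'b::euclidean_space"
  assumes "fst p \<noteq> 0"
  shows "b * (sin (theta p))\<^sup>2 - g * (cos (theta p))\<^sup>2 = xi g b (tan (theta p))"
proof -
  have p: "p \<noteq> 0" using assms by auto
  have n: "norm p \<noteq> 0" using p by simp
  have n2: "(fst p)\<^sup>2 + (norm (snd p))\<^sup>2 \<noteq> 0" using n norm_sq_prod[of p] by (metis power_not_zero)
  have s2: "(sin (theta p))\<^sup>2 = (norm (snd p))\<^sup>2 / (norm p)\<^sup>2"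
    unfolding sin2_theta using norm_sq_prod[of p] n2 by (simp add: field_simps)
  have t2: "(tan (theta p))\<^sup>2 = (norm (snd p))\<^sup>2 / (fst p)\<^sup>2"
    using cos2_theta[of p] s2 n assms by (simp add: tan_def power_divide)
  have gen: "\<And>u2 w2::real. u2 > 0 \<Longrightarrow> w2 \<ge> 0 \<Longrightarrow>
      b * (w2 / (u2 + w2)) - g * (u2 / (u2 + w2)) = (b * (w2 / u2) - g) / ((w2 / u2) + 1)"
  proof -
    fix u2 w2 :: real assume h: "u2 > 0" "w2 \<ge> 0"
    then have "u2 + w2 > 0" by simp
    have e: "w2 / u2 + 1 = (u2 + w2) / u2" using h by (simp add: field_simps)
    show "b * (w2 / (u2 + w2)) - g * (u2 / (u2 + w2)) = (b * (w2 / u2) - g) / ((w2 / u2) + 1)"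
    proof -
      have l: "b * (w2 / (u2 + w2)) - g * (u2 / (u2 + w2)) = (b*w2 - g*u2)/(u2+w2)"
        by (simp add: diff_divide_distrib)
      have m: "b * (w2 / u2) - g = (b*w2 - g*u2)/u2" using h by (simp add: field_simps)
      have r: "(b * (w2 / u2) - g) / ((w2 / u2) + 1) = (b*w2 - g*u2)/(u2+w2)"
        unfolding e m using h by simp
      show ?thesis using l r by simp
    qed
  qed
  show ?thesis unfolding xi_def t2 cos2_theta s2 norm_sq_prod[of p]
    using gen[of "(fst p)\<^sup>2" "(norm (snd p))\<^sup>2"] assms by simp
qed

lemma inner_self_nn: "inner v v = norm v * norm v" for v :: "'a::real_inner"
  by (simp add: power2_norm_eq_inner[symmetric] power2_eq_square)

lemma inner_VF: "inner p (VF a g b p) = norm p powr a * (g * (fst p)\<^sup>2 - b * (norm (snd p))\<^sup>2)"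
  for p :: "real \<times> 'b::euclidean_space"
  by (cases p) (simp add: VF_def linA_def power2_eq_square inner_self_nn algebra_simps)

lemma fst_VF: "fst (VF a g b p) = norm p powr a * (g * fst p)"
  by (simp add: VF_def linA_def)

lemma N2_deriv:
  assumes "(x has_vector_derivative v) (at t within S)"
  shows "((\<lambda>\<tau>. inner (x \<tau>) (x \<tau>)) has_real_derivative 2 * inner (x t) v) (at t within S)"
proof -
  have d: "(x has_derivative (\<lambda>h. h *\<^sub>R v)) (at t within S)"
    using assms by (simp add: has_vector_derivative_def)
  show ?thesis
    by (rule has_derivative_imp_has_field_derivative[OF has_derivative_inner[OF d d]])
       (simp add: inner_commute algebra_simps)
qed

lemma fst_deriv:
  fixes x :: "real \<Rightarrow> real \<times> 'b::euclidean_space"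
  assumes "(x has_vector_derivative v) (at t within S)"
  shows "((\<lambda>\<tau>. fst (x \<tau>)) has_real_derivative fst v) (at t within S)"
proof -
  have d: "(x has_derivative (\<lambda>h. h *\<^sub>R v)) (at t within S)"
    using assms by (simp add: has_vector_derivative_def)
  show ?thesis
    by (rule has_derivative_imp_has_field_derivative[OF has_derivative_fst[OF d]]) simp
qed

lemma norm_powr_eq: "norm p powr c = (inner p p) powr (c/2)"
  for p :: "'a::real_inner"
proof -
  have "norm p = (inner p p) powr (1/2)"
    by (simp add: norm_eq_sqrt_inner powr_half_sqrt)
  then show ?thesis by (simp add: powr_powr)
qed

lemma gen_alg: "(-a/2) * (E/N) * (2*(F*Q)) = -a*(E*F)*Q/(N::real)" by (simp add: field_simps)

lemma gen_alg2: "N = u2+w2 \<Longrightarrow> N \<noteq> 0 \<Longrightarrow> a*(b*w2 - g*u2)/N = a*(b - (b+g)*(u2/(N::real)))"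
  by (simp add: field_simps)

lemma f_deriv:
  fixes x :: "real \<Rightarrow> real \<times> 'b::euclidean_space"
  assumes "(x has_vector_derivative VF a g b (x t)) (at t within S)" "x t \<noteq> 0"
  shows "((\<lambda>\<tau>. norm (x \<tau>) powr (-a)) has_real_derivative
     a * (b * (sin (theta (x t)))\<^sup>2 - g * (cos (theta (x t)))\<^sup>2)) (at t within S)"
proof -
  let ?p = "x t"
  let ?n = "norm ?p"
  have n0: "?n > 0" using assms(2) by simp
  have ip: "inner ?p ?p = ?n\<^sup>2" by (simp add: power2_norm_eq_inner)
  have "((\<lambda>\<tau>. (inner (x \<tau>) (x \<tau>)) powr (-a/2)) has_real_derivative
      (-a/2) * (inner ?p ?p) powr (-a/2 - 1) * (2 * inner ?p (VF a g b ?p))) (at t within S)"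
    using has_real_derivative_powr[THEN DERIV_chain2, OF _ N2_deriv[OF assms(1)], of "-a/2"] n0 ip
    by simp
  moreover have "(-a/2) * (inner ?p ?p) powr (-a/2 - 1) * (2 * inner ?p (VF a g b ?p))
     = a * (b * (sin (theta ?p))\<^sup>2 - g * (cos (theta ?p))\<^sup>2)"
  proof -
    have e1: "(inner ?p ?p) powr (-a/2 - 1) = ?n powr (-a) / ?n\<^sup>2"
    proof -
      have a1: "?n\<^sup>2 = ?n powr 2" using n0 by (simp add: powr_realpow)
      have "(?n\<^sup>2) powr (-a/2 - 1) = ?n powr (2 * (-a/2 - 1))"
        by (subst a1, rule powr_powr)
      also have "2 * (-a/2 - 1) = -a - 2" by simp
      also have "?n powr (-a - 2) = ?n powr (-a) / ?n powr 2" by (rule powr_diff)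
      finally show ?thesis unfolding ip a1 .
    qed
    have e2: "?n powr (-a) * ?n powr a = 1" using n0 by (simp add: powr_add[symmetric])
    have "(-a/2) * (inner ?p ?p) powr (-a/2 - 1) * (2 * inner ?p (VF a g b ?p))
       = - a * (?n powr (-a) * ?n powr a) * (g * (fst ?p)\<^sup>2 - b * (norm (snd ?p))\<^sup>2) / ?n\<^sup>2"
      unfolding e1 inner_VF
      by (rule gen_alg)
    also have "\<dots> = a * (b * (norm (snd ?p))\<^sup>2 - g * (fst ?p)\<^sup>2) / ?n\<^sup>2"
      unfolding e2 by (simp add: algebra_simps)
    also have "\<dots> = a * (b * (sin (theta ?p))\<^sup>2 - g * (cos (theta ?p))\<^sup>2)"
      unfolding D_expr using n0 norm_sq_prod[of ?p]
      by (intro gen_alg2) auto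
    finally show ?thesis .
  qed
  moreover have "(\<lambda>\<tau>. (inner (x \<tau>) (x \<tau>)) powr (-a/2)) = (\<lambda>\<tau>. norm (x \<tau>) powr (-a))"
    by (simp add: norm_powr_eq)
  ultimately show ?thesis by simp
qed

lemma c_deriv:
  fixes x :: "real \<Rightarrow> real \<times> 'b::euclidean_space"
  assumes "(x has_vector_derivative VF a g b (x t)) (at t within S)" "x t \<noteq> 0"
    "0 \<le> g" "0 \<le> b"
  shows "\<exists>D\<ge>0. ((\<lambda>\<tau>. fst (x \<tau>) * fst (x \<tau>) / inner (x \<tau>) (x \<tau>)) has_real_derivative D) (at t within S)"
proof -
  let ?p = "x t"
  let ?F = "norm ?p powr a"
  let ?u = "fst ?p"
  let ?w = "norm (snd ?p)"
  let ?N = "inner ?p ?p"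
  have N: "?N = ?u\<^sup>2 + ?w\<^sup>2" using norm_sq_prod[of ?p] by (simp add: power2_norm_eq_inner)
  have N0: "?N \<noteq> 0" using assms(2) by simp
  have du: "((\<lambda>\<tau>. fst (x \<tau>)) has_real_derivative ?F * (g * ?u)) (at t within S)"
    using fst_deriv[OF assms(1)] by (simp add: fst_VF)
  have d: "((\<lambda>\<tau>. fst (x \<tau>) * fst (x \<tau>) / inner (x \<tau>) (x \<tau>)) has_real_derivative
     ((?F * (g * ?u) * ?u + ?F * (g * ?u) * ?u) * ?N - ?u * ?u * (2 * inner ?p (VF a g b ?p))) / (?N * ?N))
     (at t within S)"
    by (rule DERIV_divide[OF DERIV_mult[OF du du] N2_deriv[OF assms(1)] N0])
  have num: "(?F * (g * ?u) * ?u + ?F * (g * ?u) * ?u) * ?N - ?u * ?u * (2 * inner ?p (VF a g b ?p))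
     = 2 * ?F * (g + b) * (?u\<^sup>2 * ?w\<^sup>2)"
    unfolding inner_VF N by (simp add: algebra_simps power2_eq_square)
  have "0 \<le> 2 * ?F * (g + b) * (?u\<^sup>2 * ?w\<^sup>2)" using assms(3,4) by simp
  then have "0 \<le> ((?F * (g * ?u) * ?u + ?F * (g * ?u) * ?u) * ?N - ?u * ?u * (2 * inner ?p (VF a g b ?p))) / (?N * ?N)"
    unfolding num by simp
  with d show ?thesis by blast
qed

lemma step_mono: "0 < a \<Longrightarrow> 0 \<le> k \<Longrightarrow> c1 \<le> c2 \<Longrightarrow> a*(b - k*c2) \<le> a*(b - k*(c1::real))"
proof -
  assume h: "0 < a" "0 \<le> k" "c1 \<le> c2"
  have "k * c1 \<le> k * c2" using h by (intro mult_left_mono) auto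
  then have "b - k*c2 \<le> b - k*c1" by simp
  then show ?thesis using h by (intro mult_left_mono) auto
qed

lemma mvt_lb:
  fixes f f' :: "real \<Rightarrow> real"
  assumes "a \<le> b" "\<And>t. t \<in> {a..b} \<Longrightarrow> (f has_real_derivative f' t) (at t within {a..b})"
    "\<And>t. t \<in> {a..b} \<Longrightarrow> m \<le> f' t"
  shows "m * (b - a) \<le> f b - f a"
proof -
  obtain z where z: "z \<in> {a..b}" "f b - f a = f' z * (b - a)"
    using mvt_very_simple[of a b f "\<lambda>t. (*) (f' t)"] assms(1,2)
    by (auto simp: has_field_derivative_def)
  show ?thesis unfolding z(2) using assms(1) assms(3)[OF z(1)] by (simp add: mult_right_mono)
qed

lemma mvt_ub:
  fixes f f' :: "real \<Rightarrow> real"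
  assumes "a \<le> b" "\<And>t. t \<in> {a..b} \<Longrightarrow> (f has_real_derivative f' t) (at t within {a..b})"
    "\<And>t. t \<in> {a..b} \<Longrightarrow> f' t \<le> M"
  shows "f b - f a \<le> M * (b - a)"
proof -
  obtain z where z: "z \<in> {a..b}" "f b - f a = f' z * (b - a)"
    using mvt_very_simple[of a b f "\<lambda>t. (*) (f' t)"] assms(1,2)
    by (auto simp: has_field_derivative_def)
  show ?thesis unfolding z(2) using assms(1) assms(3)[OF z(1)] by (simp add: mult_right_mono)
qed

lemma cc_bounds: "0 \<le> (fst p)\<^sup>2 / (norm p)\<^sup>2 \<and> (fst p)\<^sup>2 / (norm p)\<^sup>2 \<le> 1"
  for p :: "real \<times> 'b::euclidean_space"
proof -
  have h: "(fst p)\<^sup>2 \<le> (norm p)\<^sup>2" using norm_sq_prod[of p] by simp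
  show ?thesis
  proof (cases "(norm p)\<^sup>2 = 0")
    case True then show ?thesis by simp
  next
    case False
    then have "(norm p)\<^sup>2 > 0" by simp
    then show ?thesis using h by (simp add: divide_le_eq_1)
  qed
qed

lemma D_bounds:
  fixes p :: "real \<times> 'b::euclidean_space"
  assumes "0 < a" "0 < g" "0 < b"
  shows "- g * a \<le> a * (b * (sin (theta p))\<^sup>2 - g * (cos (theta p))\<^sup>2)"
    "a * (b * (sin (theta p))\<^sup>2 - g * (cos (theta p))\<^sup>2) \<le> b * a"
proof -
  let ?c = "(fst p)\<^sup>2 / (norm p)\<^sup>2"
  have c: "0 \<le> ?c" "?c \<le> 1" using cc_bounds[of p] by auto
  have g1: "-g \<le> b - (b + g) * ?c" using c assms
    by (smt (verit) mult_left_le)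
  have g2: "b - (b + g) * ?c \<le> b" using c assms by simp
  have h1: "a * (-g) \<le> a * (b - (b + g) * ?c)"
    using assms(1) g1 by (intro mult_left_mono) auto
  have h2: "a * (b - (b + g) * ?c) \<le> a * b"
    using assms(1) g2 by (intro mult_left_mono) auto
  show "- g * a \<le> a * (b * (sin (theta p))\<^sup>2 - g * (cos (theta p))\<^sup>2)"
    unfolding D_expr using h1 by (simp only: mult.commute[of "-g"])
  show "a * (b * (sin (theta p))\<^sup>2 - g * (cos (theta p))\<^sup>2) \<le> b * a"
    unfolding D_expr using h2 by (simp only: mult.commute[of b])
qed

theorem lemma7p2:
  fixes \<alpha> \<gamma> \<beta> r0 :: real
  assumes "0 < \<alpha>" "\<alpha> < 1" "0 < \<gamma>" "0 < \<beta>" "0 < r0"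
  shows
   "(\<forall>(x :: real \<Rightarrow> real \<times> 'b::euclidean_space) T.
       is_traj \<alpha> \<gamma> \<beta> x T \<and> (\<forall>t\<in>{0..T}. x t \<in> ball 0 r0 \<and> x t \<noteq> 0) \<longrightarrow>
       (\<forall>t\<in>{0..T}.
          ((\<lambda>\<tau>. norm (x \<tau>) powr (-\<alpha>)) has_real_derivative
              \<alpha> * (\<beta> * (sin (theta (x t)))\<^sup>2 - \<gamma> * (cos (theta (x t)))\<^sup>2)) (at t within {0..T})
        \<and> (fst (x t) \<noteq> 0 \<longrightarrow>
              \<alpha> * (\<beta> * (sin (theta (x t)))\<^sup>2 - \<gamma> * (cos (theta (x t)))\<^sup>2)
                = \<alpha> * xi \<gamma> \<beta> (tan (theta (x t))))
        \<and> - \<gamma> * \<alpha> \<le> \<alpha> * (\<beta> * (sin (theta (x t)))\<^sup>2 - \<gamma> * (cos (theta (x t)))\<^sup>2)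
        \<and> \<alpha> * (\<beta> * (sin (theta (x t)))\<^sup>2 - \<gamma> * (cos (theta (x t)))\<^sup>2) \<le> \<beta> * \<alpha>
        \<and> norm (x t) powr (-\<alpha>) \<le> norm (x T) powr (-\<alpha>) + \<gamma> * \<alpha> * (T - t)
        \<and> norm (x t) powr (-\<alpha>) \<le> norm (x 0) powr (-\<alpha>) + \<beta> * \<alpha> * t))
  \<and> (\<forall>(x :: real \<Rightarrow> real \<times> 'b::euclidean_space) T0 s Ts.
       is_traj \<alpha> \<gamma> \<beta> x T0 \<and> 0 < T0 \<and> (\<forall>t\<in>{0<..<T0}. x t \<in> ball 0 r0 \<and> x t \<noteq> 0)
       \<and> norm (x 0) = r0 \<and> norm (x T0) = r0
       \<and> tan (theta (x 0)) > s \<and> s > tan (theta (x T0))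
       \<and> Ts \<in> {0..T0} \<and> tan (theta (x Ts)) = s \<longrightarrow>
       (\<forall>t\<in>{0..Ts}. norm (x t) powr (-\<alpha>) \<ge> r0 powr (-\<alpha>) + \<alpha> * xi \<gamma> \<beta> s * t)
       \<and> (\<forall>t\<in>{Ts..T0}. norm (x t) powr (-\<alpha>) \<ge> r0 powr (-\<alpha>) - \<alpha> * xi \<gamma> \<beta> s * (T0 - t)))"
  apply (rule conjI)
  subgoal
    apply (intro allI impI ballI)
    subgoal premises HH for x T t
    proof -
    note pos = assms
    let ?D = "\<lambda>p::real \<times> 'b. \<alpha> * (\<beta> * (sin (theta p))\<^sup>2 - \<gamma> * (cos (theta p))\<^sup>2)"
    have H: "is_traj \<alpha> \<gamma> \<beta> x T \<and> (\<forall>t\<in>{0..T}. x t \<in> ball 0 r0 \<and> x t \<noteq> 0)" using HH(1) .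
    have t: "t \<in> {0..T}" using HH(2) .
    have tr: "\<And>\<tau>. \<tau> \<in> {0..T} \<Longrightarrow> (x has_vector_derivative VF \<alpha> \<gamma> \<beta> (x \<tau>)) (at \<tau> within {0..T})"
      using H unfolding is_traj_def by blast
    have nz: "\<And>\<tau>. \<tau> \<in> {0..T} \<Longrightarrow> x \<tau> \<noteq> 0" using H by blast
    have fd: "\<And>\<tau>. \<tau> \<in> {0..T} \<Longrightarrow> ((\<lambda>\<tau>. norm (x \<tau>) powr (-\<alpha>)) has_real_derivative ?D (x \<tau>)) (at \<tau> within {0..T})"
      using f_deriv[OF tr nz] .
    have Db1: "\<And>p. - \<gamma> * \<alpha> \<le> ?D p" and Db2: "\<And>p. ?D p \<le> \<beta> * \<alpha>"
      using D_bounds[OF pos(1) pos(3) pos(4)] by auto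
    have Db1': "\<And>p. - (\<gamma> * \<alpha>) \<le> ?D p" using Db1 by simp
    have T1: "-\<gamma> * \<alpha> * (T - t) \<le> norm (x T) powr (-\<alpha>) - norm (x t) powr (-\<alpha>)"
      by (rule mvt_lb[where f'="\<lambda>\<tau>. ?D (x \<tau>)"])
         (use t in \<open>auto intro: DERIV_subset[OF fd] simp: Db1'\<close>)
    have T2: "norm (x t) powr (-\<alpha>) - norm (x 0) powr (-\<alpha>) \<le> \<beta> * \<alpha> * (t - 0)"
      by (rule mvt_ub[where f'="\<lambda>\<tau>. ?D (x \<tau>)"])
         (use t in \<open>auto intro: DERIV_subset[OF fd] simp: Db2\<close>)
    show "((\<lambda>\<tau>. norm (x \<tau>) powr (-\<alpha>)) has_real_derivative ?D (x t)) (at t within {0..T})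
        \<and> (fst (x t) \<noteq> 0 \<longrightarrow> ?D (x t) = \<alpha> * xi \<gamma> \<beta> (tan (theta (x t))))
        \<and> - \<gamma> * \<alpha> \<le> ?D (x t) \<and> ?D (x t) \<le> \<beta> * \<alpha>
        \<and> norm (x t) powr (-\<alpha>) \<le> norm (x T) powr (-\<alpha>) + \<gamma> * \<alpha> * (T - t)
        \<and> norm (x t) powr (-\<alpha>) \<le> norm (x 0) powr (-\<alpha>) + \<beta> * \<alpha> * t"
      using fd[OF t] xi_eq[of "x t" \<beta> \<gamma>] Db1 Db2 T1 T2 by auto
  qed
  done
  subgoal
    apply (intro allI impI)
    subgoal premises H for x T0 s Ts
    proof (intro conjI)
  let ?D = "\<lambda>p::real \<times> 'b. \<alpha> * (\<beta> * (sin (theta p))\<^sup>2 - \<gamma> * (cos (theta p))\<^sup>2)"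
  let ?c = "\<lambda>p::real \<times> 'b. (fst p)\<^sup>2 / (norm p)\<^sup>2"
  let ?f = "\<lambda>\<tau>. norm (x \<tau>) powr (-\<alpha>)"
  have tr: "\<And>\<tau>. \<tau> \<in> {0..T0} \<Longrightarrow> (x has_vector_derivative VF \<alpha> \<gamma> \<beta> (x \<tau>)) (at \<tau> within {0..T0})"
    using H unfolding is_traj_def by blast
  have nz: "\<And>\<tau>. \<tau> \<in> {0..T0} \<Longrightarrow> x \<tau> \<noteq> 0"
  proof -
    fix \<tau> assume "\<tau> \<in> {0..T0}"
    then consider "\<tau> = 0" | "\<tau> = T0" | "\<tau> \<in> {0<..<T0}" by fastforce
    moreover have "norm (x 0) = r0" "norm (x T0) = r0" "\<forall>t\<in>{0<..<T0}. x t \<noteq> 0"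
      using H by blast+
    ultimately show "x \<tau> \<noteq> 0" using assms(5) by cases auto
  qed
  have fd: "\<And>\<tau>. \<tau> \<in> {0..T0} \<Longrightarrow> (?f has_real_derivative ?D (x \<tau>)) (at \<tau> within {0..T0})"
    using f_deriv[OF tr nz] .
  have cfun: "\<And>\<tau>. fst (x \<tau>) * fst (x \<tau>) / inner (x \<tau>) (x \<tau>) = ?c (x \<tau>)"
    by (simp add: inner_self_nn power2_eq_square)
  have cd: "\<And>\<tau>. \<tau> \<in> {0..T0} \<Longrightarrow> \<exists>D\<ge>0. ((\<lambda>\<tau>. ?c (x \<tau>)) has_real_derivative D) (at \<tau> within {0..T0})"
  proof -
    fix \<tau> assume h: "\<tau> \<in> {0..T0}"
    have "\<exists>D\<ge>0. ((\<lambda>\<tau>. fst (x \<tau>) * fst (x \<tau>) / inner (x \<tau>) (x \<tau>)) has_real_derivative D) (at \<tau> within {0..T0})"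
      by (rule c_deriv[OF tr[OF h] nz[OF h]]) (use assms in auto)
    then show "\<exists>D\<ge>0. ((\<lambda>\<tau>. ?c (x \<tau>)) has_real_derivative D) (at \<tau> within {0..T0})" unfolding cfun .
  qed
  obtain cD where cD: "\<And>\<tau>. \<tau> \<in> {0..T0} \<Longrightarrow> cD \<tau> \<ge> 0 \<and> ((\<lambda>\<tau>. ?c (x \<tau>)) has_real_derivative cD \<tau>) (at \<tau> within {0..T0})"
    using cd by metis
  have cmono: "?c (x a) \<le> ?c (x b)" if "0 \<le> a" "a \<le> b" "b \<le> T0" for a b
  proof -
    have "0 * (b - a) \<le> ?c (x b) - ?c (x a)"
    proof (rule mvt_lb[where f'=cD])
      fix t assume "t \<in> {a..b}"
      then have "t \<in> {0..T0}" using that by auto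
      then show "((\<lambda>\<tau>. ?c (x \<tau>)) has_real_derivative cD t) (at t within {a..b})"
        "0 \<le> cD t" using cD[of t] that by (auto intro: DERIV_subset)
    qed (use that in auto)
    then show ?thesis by simp
  qed
  have Ts: "0 \<le> Ts" "Ts \<le> T0" using H by auto
  have s0: "0 < s" using H tan_theta_nonneg[of "x T0"] by linarith
  have cTs: "?c (x Ts) = 1 / (1 + s\<^sup>2)"
  proof -
    have tn: "tan (theta (x Ts)) = s" using H by blast
    have cz: "cos (theta (x Ts)) \<noteq> 0" using tn s0 by (auto simp: tan_def)
    have "s\<^sup>2 = (sin (theta (x Ts)))\<^sup>2 / (cos (theta (x Ts)))\<^sup>2"
      unfolding tn[symmetric] tan_def by (rule power_divide)
    also have "\<dots> = (1 - ?c (x Ts)) / ?c (x Ts)"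
      using sin_cos_squared_add[of "theta (x Ts)"] cos2_theta[of "x Ts"] by simp
    finally have e: "s\<^sup>2 = (1 - ?c (x Ts)) / ?c (x Ts)" .
    have c0: "?c (x Ts) \<noteq> 0" unfolding cos2_theta[symmetric] using cz by simp
    from e c0 have "?c (x Ts) * (1 + s\<^sup>2) = 1" by (simp add: field_simps)
    moreover have "\<And>c::real. c * (1 + s\<^sup>2) = 1 \<Longrightarrow> c = 1 / (1 + s\<^sup>2)"
    proof -
      fix c :: real assume "c * (1 + s\<^sup>2) = 1"
      moreover have "1 + s\<^sup>2 \<noteq> 0" by (metis add_pos_nonneg zero_less_one zero_le_power2 less_irrefl)
      ultimately show "c = 1 / (1 + s\<^sup>2)" by (simp add: eq_divide_eq)
    qed
    ultimately show ?thesis by blast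
  qed
  have xis: "\<alpha> * xi \<gamma> \<beta> s = \<alpha> * (\<beta> - (\<beta> + \<gamma>) * ?c (x Ts))"
  proof -
    have "xi \<gamma> \<beta> s = \<beta> - (\<beta> + \<gamma>) * (1 / (1 + s\<^sup>2))"
    proof -
      have q: "1 + s\<^sup>2 \<noteq> 0" "s\<^sup>2 + 1 \<noteq> 0" by (metis add_pos_nonneg zero_less_one zero_le_power2 less_irrefl add.commute)+
      show ?thesis unfolding xi_def using q by (simp add: field_simps)
    qed
    then show ?thesis unfolding cTs by simp
  qed
  have Dc: "\<And>p. ?D p = \<alpha> * (\<beta> - (\<beta> + \<gamma>) * ?c p)" by (simp only: D_expr)
  have f0: "?f 0 = r0 powr (-\<alpha>)" and fT: "?f T0 = r0 powr (-\<alpha>)" using H by auto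
  show "\<forall>t\<in>{0..Ts}. norm (x t) powr (-\<alpha>) \<ge> r0 powr (-\<alpha>) + \<alpha> * xi \<gamma> \<beta> s * t"
  proof
    fix t assume t: "t \<in> {0..Ts}"
    have lb: "\<And>\<tau>. \<tau> \<in> {0..t} \<Longrightarrow> \<alpha> * xi \<gamma> \<beta> s \<le> ?D (x \<tau>)"
    proof -
      fix \<tau> assume "\<tau> \<in> {0..t}"
      then have "?c (x \<tau>) \<le> ?c (x Ts)" using t Ts by (intro cmono) auto
      then show "\<alpha> * xi \<gamma> \<beta> s \<le> ?D (x \<tau>)" unfolding xis Dc using assms
        by (intro step_mono) auto
    qed
    have "\<alpha> * xi \<gamma> \<beta> s * (t - 0) \<le> ?f t - ?f 0"
      by (rule mvt_lb[where f'="\<lambda>\<tau>. ?D (x \<tau>)"])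
         (use t Ts in \<open>auto intro: DERIV_subset[OF fd] lb\<close>)
    then show "norm (x t) powr (-\<alpha>) \<ge> r0 powr (-\<alpha>) + \<alpha> * xi \<gamma> \<beta> s * t" using f0 by simp
  qed
  show "\<forall>t\<in>{Ts..T0}. norm (x t) powr (-\<alpha>) \<ge> r0 powr (-\<alpha>) - \<alpha> * xi \<gamma> \<beta> s * (T0 - t)"
  proof
    fix t assume t: "t \<in> {Ts..T0}"
    have ub: "\<And>\<tau>. \<tau> \<in> {t..T0} \<Longrightarrow> ?D (x \<tau>) \<le> \<alpha> * xi \<gamma> \<beta> s"
    proof -
      fix \<tau> assume "\<tau> \<in> {t..T0}"
      then have "?c (x Ts) \<le> ?c (x \<tau>)" using t Ts by (intro cmono) auto
      then show "?D (x \<tau>) \<le> \<alpha> * xi \<gamma> \<beta> s" unfolding xis Dc using assms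
        by (intro step_mono) auto
    qed
    have "?f T0 - ?f t \<le> \<alpha> * xi \<gamma> \<beta> s * (T0 - t)"
      by (rule mvt_ub[where f'="\<lambda>\<tau>. ?D (x \<tau>)"])
         (use t Ts in \<open>auto intro: DERIV_subset[OF fd] ub\<close>)
    then show "norm (x t) powr (-\<alpha>) \<ge> r0 powr (-\<alpha>) - \<alpha> * xi \<gamma> \<beta> s * (T0 - t)" using fT by simp
  qed
qed
  done
  done

end
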